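(* Let $n_\text{S}, n_\text{R}\ge 1$ be integers and let $\gamma_\text{S}>0$ and $\lambda_{\text{eq}}^G>0$ be real numbers. Let $Y$ be an Erlang random variable with shape and rate parameters both equal to $n_\text{S}$, i.e. with density $f_Y(y)=\frac{n_\text{S}^{n_\text{S}}}{(n_\text{S}-1)!}y^{n_\text{S}-1}e^{-n_\text{S}y}$ for $y>0$, and let $X_1,\dots,X_{n_\text{R}}$ be i.i.d. exponential random variables with unit mean, independent of $Y$. Put $V=\lambda_{\text{eq}}^G\sum_{j=1}^{n_\text{R}}X_j$ (an Erlang random variable with shape $n_\text{R}$ and rate $1/\lambda_{\text{eq}}^G$) and $$\gamma_\text{D}=\gamma_\text{S}\,Y\,\frac{V}{1+V}.$$ Then for every $x>0$, writing $w=\frac{x}{\gamma_\text{S}}$, $$\mathbb{P}(\gamma_\text{D}\le x)=1-2(n_\text{S}w)^{n_\text{S}}e^{-n_\text{S}w}\sum_{m=0}^{n_\text{R}-1}\sum_{n=0}^{n_\text{S}-1}\frac{n_\text{S}^m(\lambda_{\text{eq}}^G n_\text{S}w)^{-\frac{m+n+1}{2}}\,w^m}{m!\,n!\,(n_\text{S}-n-1)!}\,\mathrm{K}_{m-n-1}\!\left(2\sqrt{\frac{n_\text{S}w}{\lambda_{\text{eq}}^G}}\right),$$ where $\mathrm{K}_\nu$ denotes the modified Bessel function of the second kind of order $\nu$.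
   Context: This is the distribution of the received SNR $\gamma_\text{D}$ at the single-antenna destination of a dual-hop amplify-and-forward relay system (source with $n_\text{S}$ antennas, relay with $n_\text{R}$ antennas, Rayleigh fading) when the relay antennas are uncorrelated (correlation matrix equal to the identity), and the relay allocates the same gain $\lambda_{\text{eq}}^G$ to every eigenmode; $\gamma_\text{S}$ is the source transmit SNR. The claim as stated is purely about the random variables defined in it. *)

theory Defs
  imports "HOL-Probability.Probability"
begin

text \<open>Modified Bessel function of the second kind, via the standard integral
representation K_nu(z) = int_0^infty exp(-z cosh t) cosh(nu t) dt, valid for z > 0.\<close>
definition besselK :: "real \<Rightarrow> real \<Rightarrow> real" where
  "besselK \<nu> z = (LBINT t:{0<..}. exp (- z * cosh t) * cosh (\<nu> * t))"

end

theory Submission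
  imports Defs
begin

lemma cosh_le_exp_abs: "cosh (x::real) \<le> exp \<bar>x\<bar>"
  by (cases "x \<ge> 0") (auto simp: cosh_def)

lemma cosh_ge_quad: "(s::real) \<ge> 0 \<Longrightarrow> s^2/4 \<le> cosh s"
proof -
  assume s: "s \<ge> 0"
  have "1 + s + s^2/2 \<le> exp s" using exp_lower_Taylor_quadratic[OF s] .
  moreover have "1 + (-s) \<le> exp (-s)" by (rule exp_ge_add_one_self)
  ultimately show ?thesis by (simp add: cosh_def)
qed

lemma borel_cosh[measurable]: "(cosh :: real \<Rightarrow> real) \<in> borel_measurable borel"
  by (intro borel_measurable_continuous_onI continuous_intros)

lemma bessel_bound:
  fixes z nu s :: real assumes z: "z > 0" and s: "s \<ge> 0"
  shows "exp (-z * cosh s) * cosh (nu * s) \<le> exp ((\<bar>nu\<bar>+1)^2/z) * exp (-s)"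
proof -
  have "exp (-z * cosh s) * cosh (nu * s) \<le> exp (-z * (s^2/4)) * exp (\<bar>nu\<bar> * s)"
  proof (rule mult_mono)
    have "z * (s^2/4) \<le> z * cosh s" using cosh_ge_quad[OF assms(2)] z by (intro mult_left_mono) auto
    then show "exp (-z * cosh s) \<le> exp (-z * (s^2/4))" by simp
    show "cosh (nu * s) \<le> exp (\<bar>nu\<bar> * s)" using cosh_le_exp_abs[of "nu * s"] assms(2) by (simp add: abs_mult)
  qed auto
  also have "\<dots> = exp (-z * (s^2/4) + \<bar>nu\<bar> * s)" by (simp add: exp_add[symmetric] algebra_simps)
  also have "\<dots> \<le> exp ((\<bar>nu\<bar>+1)^2/z - s)"
  proof -
    have "0 \<le> (z * s - 2*(\<bar>nu\<bar>+1))^2/(4*z)" using z by simp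
    also have "(z * s - 2*(\<bar>nu\<bar>+1))^2/(4*z) = z * s^2/4 - (\<bar>nu\<bar>+1) * s + (\<bar>nu\<bar>+1)^2/z"
      using z by (simp add: field_simps power2_eq_square)
    finally show ?thesis by (simp add: ring_distribs)
  qed
  also have "\<dots> = exp ((\<bar>nu\<bar>+1)^2/z) * exp (-s)" by (simp add: exp_diff exp_minus field_simps)
  finally show ?thesis .
qed

lemma nn_exp_neg: "(\<integral>\<^sup>+s. ennreal (exp (-s)) * indicator {0<..} s \<partial>lborel) \<le> 1"
proof -
  have "(\<integral>\<^sup>+s. ennreal (exp (-s)) * indicator {0<..} s \<partial>lborel)
     \<le> (\<integral>\<^sup>+ x. ennreal (erlang_density 0 1 x * x ^ 0) \<partial>lborel)"
    by (intro nn_integral_mono) (auto simp: erlang_density_def split: split_indicator)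
  also have "\<dots> = 1" by (subst nn_integral_erlang_ith_moment) auto
  finally show ?thesis .
qed

lemma besselK_nn:
  fixes z nu :: real assumes z: "z > 0"
  shows "ennreal (besselK nu z) = (\<integral>\<^sup>+s. ennreal (exp (-z * cosh s) * cosh (nu * s)) * indicator {0<..} s \<partial>lborel)"
proof -
  define h where "h s = indicator {0<..} s * (exp (-z * cosh s) * cosh (nu * s))" for s :: real
  have hnn: "0 \<le> h s" for s by (simp add: h_def)
  have hm: "h \<in> borel_measurable lborel" unfolding h_def by measurable
  have "(\<integral>\<^sup>+s. ennreal (h s) \<partial>lborel) \<le> (\<integral>\<^sup>+s. ennreal (exp ((\<bar>nu\<bar>+1)^2/z)) * (ennreal (exp (-s)) * indicator {0<..} s) \<partial>lborel)"
    using bessel_bound[OF z]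
    by (intro nn_integral_mono) (auto simp: h_def ennreal_mult[symmetric] split: split_indicator)
  also have "\<dots> = ennreal (exp ((\<bar>nu\<bar>+1)^2/z)) * (\<integral>\<^sup>+s. ennreal (exp (-s)) * indicator {0<..} s \<partial>lborel)"
    by (rule nn_integral_cmult) auto
  also have "\<dots> < \<infinity>"
  proof -
    have "(\<integral>\<^sup>+s. ennreal (exp (-s)) * indicator {0<..} s \<partial>lborel) < \<infinity>"
      using nn_exp_neg by (rule le_less_trans) simp
    then show ?thesis by (simp add: ennreal_mult_less_top)
  qed
  finally have fin: "(\<integral>\<^sup>+s. ennreal (h s) \<partial>lborel) < \<infinity>" .
  have int: "integrable lborel h" by (rule integrableI_nonneg[OF hm]) (use hnn fin in auto)
  have "besselK nu z = integral\<^sup>L lborel h"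
    unfolding besselK_def set_lebesgue_integral_def h_def by simp
  then have "ennreal (besselK nu z) = (\<integral>\<^sup>+s. ennreal (h s) \<partial>lborel)"
    using nn_integral_eq_integral[OF int] hnn by simp
  also have "\<dots> = (\<integral>\<^sup>+s. ennreal (exp (-z * cosh s) * cosh (nu * s)) * indicator {0<..} s \<partial>lborel)"
    by (intro nn_integral_cong) (auto simp: h_def split: split_indicator)
  finally show ?thesis .
qed

lemma ennreal_2mult: "0 \<le> y \<Longrightarrow> ennreal (2 * y) = 2 * ennreal y"
  by (simp add: ennreal_mult)

lemma subst_exp:
  fixes f :: "real \<Rightarrow> real" and c :: real
  assumes c: "c > 0" and f[measurable]: "f \<in> borel_measurable borel"
  shows "(\<integral>\<^sup>+t. ennreal (f t) * indicator {0<..} t \<partial>lborel) = (\<integral>\<^sup>+s. ennreal (f (c * exp s) * (c * exp s)) \<partial>lborel)"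
proof -
  define A where "A n = {c * exp (- real n) .. c * exp (real n)}" for n::nat
  define B where "B n = {- real n .. real n}" for n::nat
  let ?D1 = "density lborel (\<lambda>t. ennreal (f t))"
  let ?D2 = "density lborel (\<lambda>s. ennreal (f (c * exp s) * (c * exp s)))"
  have eq: "emeasure ?D1 (A n) = emeasure ?D2 (B n)" for n
  proof -
    have "emeasure ?D1 (A n) = (\<integral>\<^sup>+t. ennreal (f t * indicator (A n) t) \<partial>lborel)"
      by (subst emeasure_density) (auto simp: A_def intro!: nn_integral_cong split: split_indicator)
    also have "\<dots> = (\<integral>\<^sup>+s. ennreal (f (c * exp s) * (c * exp s) * indicator (B n) s) \<partial>lborel)"
      unfolding A_def B_def
      by (subst nn_integral_substitution[where g="\<lambda>s. c * exp s" and g'="\<lambda>s. c * exp s"])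
         (auto intro!: derivative_eq_intros continuous_intros simp: set_borel_measurable_def c less_imp_le)
    also have "\<dots> = emeasure ?D2 (B n)"
      by (subst emeasure_density) (auto simp: B_def intro!: nn_integral_cong split: split_indicator)
    finally show ?thesis .
  qed
  have incA: "incseq A" unfolding A_def incseq_def
  proof (intro allI impI subsetI)
    fix m n :: nat and t assume mn: "m \<le> n" and t: "t \<in> {c * exp (- real m)..c * exp (real m)}"
    have "c * exp (- real n) \<le> c * exp (- real m)" using mn c by (intro mult_left_mono) auto
    moreover have "c * exp (real m) \<le> c * exp (real n)" using mn c by (intro mult_left_mono) auto
    ultimately show "t \<in> {c * exp (- real n)..c * exp (real n)}" using t by auto
  qed
  have incB: "incseq B" unfolding B_def incseq_def by auto
  have UA: "(\<Union>n. A n) = {0<..}"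
  proof (intro equalityI subsetI)
    fix t assume "t \<in> (\<Union>n. A n)"
    then obtain n where "t \<in> A n" by auto
    then show "t \<in> {0<..}" using c by (auto simp: A_def intro: less_le_trans[of 0 "c * exp (- real n)"])
  next
    fix t :: real assume "t \<in> {0<..}"
    then have t: "t > 0" by simp
    define n where "n = nat \<lceil>\<bar>ln (t / c)\<bar>\<rceil>"
    have n: "\<bar>ln (t / c)\<bar> \<le> real n" unfolding n_def by linarith
    have teq: "t = c * exp (ln (t / c))" using t c by simp
    have "c * exp (- real n) \<le> c * exp (ln (t / c))" using n c by (intro mult_left_mono) auto
    moreover have "c * exp (ln (t / c)) \<le> c * exp (real n)" using n c by (intro mult_left_mono) auto
    ultimately have "t \<in> A n" unfolding A_def using teq by auto
    then show "t \<in> (\<Union>n. A n)" by auto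
  qed
  have UB: "(\<Union>n. B n) = UNIV"
  proof (intro equalityI subsetI)
    fix s :: real
    define n where "n = nat \<lceil>\<bar>s\<bar>\<rceil>"
    have "\<bar>s\<bar> \<le> real n" unfolding n_def by linarith
    then have "s \<in> B n" unfolding B_def by auto
    then show "s \<in> (\<Union>n. B n)" by auto
  qed auto
  have "(\<integral>\<^sup>+t. ennreal (f t) * indicator {0<..} t \<partial>lborel) = emeasure ?D1 {0<..}"
    by (simp add: emeasure_density)
  also have "\<dots> = emeasure ?D1 (\<Union>n. A n)" using UA by simp
  also have "\<dots> = (SUP n. emeasure ?D1 (A n))"
    by (rule SUP_emeasure_incseq[symmetric, OF _ incA]) (auto simp: A_def)
  also have "\<dots> = (SUP n. emeasure ?D2 (B n))" using eq by simp
  also have "\<dots> = emeasure ?D2 (\<Union>n. B n)"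
    by (rule SUP_emeasure_incseq[OF _ incB]) (auto simp: B_def)
  also have "\<dots> = (\<integral>\<^sup>+s. ennreal (f (c * exp s) * (c * exp s)) \<partial>lborel)"
    using UB by (simp add: emeasure_density)
  finally show ?thesis .
qed

lemma sym_half:
  fixes z nu :: real
  shows "(\<integral>\<^sup>+s. ennreal (exp (nu * s) * exp (-z * cosh s)) \<partial>lborel)
     = 2 * (\<integral>\<^sup>+s. ennreal (exp (-z * cosh s) * cosh (nu * s)) * indicator {0<..} s \<partial>lborel)"
proof -
  define h where "h s = exp (nu * s) * exp (-z * cosh s)" for s
  have hm[measurable]: "h \<in> borel_measurable borel" unfolding h_def by measurable
  have "(\<integral>\<^sup>+s. ennreal (h s) \<partial>lborel) =
     (\<integral>\<^sup>+s. ennreal (h s) * indicator {0<..} s + ennreal (h s) * indicator {..0} s \<partial>lborel)"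
    by (intro nn_integral_cong) (auto split: split_indicator)
  also have "\<dots> = (\<integral>\<^sup>+s. ennreal (h s) * indicator {0<..} s \<partial>lborel) + (\<integral>\<^sup>+s. ennreal (h s) * indicator {..0} s \<partial>lborel)"
    by (rule nn_integral_add) auto
  also have "(\<integral>\<^sup>+s. ennreal (h s) * indicator {..0} s \<partial>lborel) = (\<integral>\<^sup>+s. ennreal (h (-s)) * indicator {..0} (-s) \<partial>lborel)"
    by (subst nn_integral_real_affine[where c="-1" and t=0]) auto
  also have "\<dots> = (\<integral>\<^sup>+s. ennreal (h (-s)) * indicator {0<..} s \<partial>lborel)"
    by (intro nn_integral_cong_AE) (use AE_lborel_singleton[of 0] in \<open>auto elim!: eventually_mono split: split_indicator\<close>)
  also have "(\<integral>\<^sup>+s. ennreal (h s) * indicator {0<..} s \<partial>lborel) + \<dots> =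
     (\<integral>\<^sup>+s. ennreal (h s) * indicator {0<..} s + ennreal (h (-s)) * indicator {0<..} s \<partial>lborel)"
    by (rule nn_integral_add[symmetric]) auto
  also have "\<dots> = (\<integral>\<^sup>+s. 2 * (ennreal (exp (-z * cosh s) * cosh (nu * s)) * indicator {0<..} s) \<partial>lborel)"
  proof (intro nn_integral_cong)
    fix s :: real
    have "h s + h (-s) = 2 * (exp (-z * cosh s) * cosh (nu * s))"
      by (simp add: h_def cosh_field_def algebra_simps)
    moreover have "0 \<le> cosh (nu * s)" using cosh_real_ge_1[of "nu * s"] by simp
    moreover have "0 \<le> h s" "0 \<le> h (-s)" by (auto simp: h_def)
    ultimately show "ennreal (h s) * indicator {0<..} s + ennreal (h (-s)) * indicator {0<..} s =
      2 * (ennreal (exp (-z * cosh s) * cosh (nu * s)) * indicator {0<..} s)"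
      by (auto simp: ennreal_plus[symmetric] ennreal_2mult split: split_indicator
               simp del: ennreal_plus)
  qed
  also have "\<dots> = 2 * (\<integral>\<^sup>+s. ennreal (exp (-z * cosh s) * cosh (nu * s)) * indicator {0<..} s \<partial>lborel)"
    by (rule nn_integral_cmult) auto
  finally show ?thesis unfolding h_def .
qed

lemma besselK_nonneg: "0 \<le> besselK nu z"
  unfolding besselK_def set_lebesgue_integral_def
  by (rule integral_nonneg_AE) (auto intro!: mult_nonneg_nonneg simp: indicator_def less_imp_le[OF cosh_real_pos])

lemma bessel_int:
  fixes a b nu :: real assumes a: "a > 0" and b: "b > 0"
  shows "(\<integral>\<^sup>+t. ennreal (t powr (nu - 1) * exp (- a * t - b / t)) * indicator {0<..} t \<partial>lborel)
    = ennreal (2 * (b / a) powr (nu / 2) * besselK nu (2 * sqrt (a * b)))"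
proof -
  define c where "c = sqrt (b / a)"
  define z where "z = 2 * sqrt (a * b)"
  have c: "c > 0" using a b by (simp add: c_def)
  have z: "z > 0" using a b by (simp add: z_def)
  have ac: "a * c = sqrt (a * b)"
  proof -
    have "a * b = a^2 * (b / a)" using a by (simp add: power2_eq_square)
    moreover have "sqrt (a^2 * (b / a)) = sqrt (a^2) * sqrt (b / a)" by (rule real_sqrt_mult)
    ultimately show ?thesis using a by (simp add: c_def)
  qed
  have bc: "b / c = sqrt (a * b)"
  proof -
    have "c * sqrt (a * b) = sqrt (b / a * (a * b))" unfolding c_def by (rule real_sqrt_mult[symmetric])
    also have "b / a * (a * b) = b^2" using a by (simp add: power2_eq_square)
    finally have "c * sqrt (a * b) = b" using b by simp
    then show ?thesis using c by (simp add: field_simps)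
  qed
  have pw: "(b / a) powr (nu / 2) = c powr nu"
    unfolding c_def using a b by (simp add: powr_half_sqrt[symmetric] powr_powr)
  define f where "f t = t powr (nu - 1) * exp (- a * t - b / t)" for t :: real
  have fm[measurable]: "f \<in> borel_measurable borel" unfolding f_def by measurable
  have pt: "f (c * exp s) * (c * exp s) = c powr nu * (exp (nu * s) * exp (- z * cosh s))" for s
  proof -
    define u where "u = c * exp s"
    have u: "u > 0" using c by (simp add: u_def)
    have "u powr nu = u powr ((nu - 1) + 1)" by simp
    also have "\<dots> = u powr (nu - 1) * u powr 1" by (rule powr_add)
    also have "\<dots> = u powr (nu - 1) * u" using u by simp
    finally have "u powr (nu - 1) * u = u powr nu" by simp
    also have "u powr nu = c powr nu * exp (nu * s)"
      unfolding u_def using c by (simp add: powr_mult exp_powr_real mult.commute)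
    finally have 1: "u powr (nu - 1) * u = c powr nu * exp (nu * s)" .
    have "b / u = sqrt (a * b) * exp (- s)" unfolding u_def using c
      by (simp add: exp_minus field_simps bc[symmetric])
    moreover have "a * u = sqrt (a * b) * exp s" unfolding u_def by (simp add: ac[symmetric])
    ultimately have 2: "- a * u - b / u = - z * cosh s"
      by (simp add: z_def cosh_field_def algebra_simps)
    show ?thesis using 1 2 unfolding f_def u_def[symmetric] by (simp add: algebra_simps)
  qed
  have "(\<integral>\<^sup>+t. ennreal (t powr (nu - 1) * exp (- a * t - b / t)) * indicator {0<..} t \<partial>lborel)
      = (\<integral>\<^sup>+s. ennreal (f (c * exp s) * (c * exp s)) \<partial>lborel)"
    unfolding f_def[symmetric] by (rule subst_exp[OF c fm])
  also have "\<dots> = (\<integral>\<^sup>+s. ennreal (c powr nu) * ennreal (exp (nu * s) * exp (- z * cosh s)) \<partial>lborel)"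
    by (intro nn_integral_cong) (simp add: pt ennreal_mult)
  also have "\<dots> = ennreal (c powr nu) * (\<integral>\<^sup>+s. ennreal (exp (nu * s) * exp (- z * cosh s)) \<partial>lborel)"
    by (rule nn_integral_cmult) auto
  also have "\<dots> = ennreal (c powr nu) * (2 * ennreal (besselK nu z))"
    unfolding sym_half besselK_nn[OF z] ..
  also have "\<dots> = ennreal (c powr nu) * ennreal (2 * besselK nu z)"
    using besselK_nonneg[of nu z] by (simp only: ennreal_2mult)
  also have "\<dots> = ennreal (c powr nu * (2 * besselK nu z))"
    by (rule ennreal_mult[symmetric]) (use besselK_nonneg[of nu z] in auto)
  also have "\<dots> = ennreal (2 * (b / a) powr (nu / 2) * besselK nu (2 * sqrt (a * b)))"
    unfolding pw z_def by (simp add: mult_ac)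
  finally show ?thesis .
qed

lemma erlang_tail:
  fixes c :: real assumes c: "c \<ge> 0"
  shows "(\<integral>\<^sup>+s. ennreal (erlang_density k 1 s) * indicator {c<..} s \<partial>lborel)
      = ennreal (\<Sum>m\<le>k. c ^ m * exp (- c) / fact m)"
proof -
  define Q where "Q = (\<Sum>m\<le>k. c ^ m * exp (- c) / fact m)"
  define X where "X = (\<integral>\<^sup>+s. ennreal (erlang_density k 1 s) * indicator {c<..} s \<partial>lborel)"
  have cdf: "erlang_CDF k 1 c = 1 - Q" using c by (simp add: erlang_CDF_def Q_def)
  have Q1: "0 \<le> 1 - Q" using erlang_CDF_nonneg[of 1 k c] cdf by simp
  have Q0: "0 \<le> Q" unfolding Q_def using c by (intro sum_nonneg) auto
  have "1 = (\<integral>\<^sup>+ x. ennreal (erlang_density k 1 x * x ^ 0) \<partial>lborel)"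
    by (subst nn_integral_erlang_ith_moment) auto
  also have "\<dots> = (\<integral>\<^sup>+ s. ennreal (erlang_density k 1 s) * indicator {c<..} s + ennreal (erlang_density k 1 s) * indicator {..c} s \<partial>lborel)"
    by (intro nn_integral_cong) (auto split: split_indicator)
  also have "\<dots> = X + (\<integral>\<^sup>+ s. ennreal (erlang_density k 1 s) * indicator {..c} s \<partial>lborel)"
    unfolding X_def by (rule nn_integral_add) auto
  also have "(\<integral>\<^sup>+ s. ennreal (erlang_density k 1 s) * indicator {..c} s \<partial>lborel) = ennreal (1 - Q)"
    using nn_integral_erlang_density[of 1 k c] cdf by simp
  finally have "1 = X + ennreal (1 - Q)" .
  then have "X = 1 - ennreal (1 - Q)" by (metis ennreal_add_diff_cancel_right ennreal_neq_top)
  also have "\<dots> = ennreal Q" using Q1 by (simp add: ennreal_minus[symmetric, of "1 - Q" 1, simplified] ennreal_1[symmetric] del: ennreal_1)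
  finally show ?thesis unfolding X_def Q_def .
qed

lemma cond_iff:
  fixes w lam y s :: real assumes w: "w > 0" and lam: "lam > 0" and s: "s \<ge> 0"
  shows "(w < y * (lam * s / (1 + lam * s))) \<longleftrightarrow> (w < y \<and> w / (lam * (y - w)) < s)"
proof -
  have d: "1 + lam * s > 0" using lam s by (simp add: add_pos_nonneg)
  have "(w < y * (lam * s / (1 + lam * s))) \<longleftrightarrow> w * (1 + lam * s) < y * (lam * s)"
    using d by (simp add: less_divide_eq)
  also have "\<dots> \<longleftrightarrow> w < lam * s * (y - w)" by (simp add: algebra_simps)
  also have "\<dots> \<longleftrightarrow> (w < y \<and> w / (lam * (y - w)) < s)"
  proof
    assume h: "w < lam * s * (y - w)"
    have "0 < lam * s * (y - w)" using h w by linarith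
    moreover have "0 \<le> lam * s" using lam s by simp
    ultimately have yw: "w < y" by (auto simp: zero_less_mult_iff)
    then have "0 < lam * (y - w)" using lam by simp
    then show "w < y \<and> w / (lam * (y - w)) < s" using yw h by (simp add: divide_less_eq mult_ac)
  next
    assume h: "w < y \<and> w / (lam * (y - w)) < s"
    then have "0 < lam * (y - w)" using lam by simp
    then show "w < lam * s * (y - w)" using h by (simp add: divide_less_eq mult_ac)
  qed
  finally show ?thesis .
qed

lemma inner_int:
  fixes w lam y :: real assumes w: "w > 0" and lam: "lam > 0"
  shows "(\<integral>\<^sup>+s. ennreal (erlang_density k 1 s) * indicator {s. w < y * (lam * s / (1 + lam * s))} s \<partial>lborel)
     = ennreal (if w < y then (\<Sum>m\<le>k. (w / (lam * (y - w))) ^ m * exp (- (w / (lam * (y - w)))) / fact m) else 0)"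
proof -
  have "(\<integral>\<^sup>+s. ennreal (erlang_density k 1 s) * indicator {s. w < y * (lam * s / (1 + lam * s))} s \<partial>lborel)
      = (\<integral>\<^sup>+s. (if w < y then ennreal (erlang_density k 1 s) * indicator {w / (lam * (y - w))<..} s else 0) \<partial>lborel)"
  proof (intro nn_integral_cong)
    fix s :: real
    show "ennreal (erlang_density k 1 s) * indicator {s. w < y * (lam * s / (1 + lam * s))} s =
      (if w < y then ennreal (erlang_density k 1 s) * indicator {w / (lam * (y - w))<..} s else 0)"
    proof (cases "s \<ge> 0")
      case True
      then show ?thesis using cond_iff[OF w lam True, of y] by (auto split: split_indicator)
    next
      case False
      then show ?thesis by (auto simp: erlang_density_def)
    qed
  qed
  also have "\<dots> = ennreal (if w < y then (\<Sum>m\<le>k. (w / (lam * (y - w))) ^ m * exp (- (w / (lam * (y - w)))) / fact m) else 0)"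
  proof (cases "w < y")
    case True
    then have "0 \<le> w / (lam * (y - w))" using w lam by simp
    then show ?thesis using True erlang_tail by simp
  qed simp
  finally show ?thesis .
qed

definition coefT :: "nat \<Rightarrow> real \<Rightarrow> real \<Rightarrow> nat \<Rightarrow> nat \<Rightarrow> real" where
  "coefT N w lam m n = real (Suc N) ^ Suc N * exp (- real (Suc N) * w) * w ^ (N - n) * (w / lam) ^ m
      / (fact n * fact (N - n) * fact m)"

lemma core_id:
  fixes w lam a :: real assumes w: "w > 0" and lam: "lam > 0" and a: "a > 0" and n: "n \<le> N"
  shows "w ^ (N - n) * (w / lam) ^ m * ((w / lam) / a) powr ((real n - real m + 1) / 2)
       = w ^ Suc N * a ^ m * (lam * a * w) powr (- (real m + real n + 1) / 2) * w ^ m"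
proof -
  have L: "0 < w ^ (N - n) * (w / lam) ^ m * ((w / lam) / a) powr ((real n - real m + 1) / 2)"
    using w lam a by simp
  have R: "0 < w ^ Suc N * a ^ m * (lam * a * w) powr (- (real m + real n + 1) / 2) * w ^ m"
    using w lam a by simp
  have "ln (w ^ (N - n) * (w / lam) ^ m * ((w / lam) / a) powr ((real n - real m + 1) / 2))
      = ln (w ^ Suc N * a ^ m * (lam * a * w) powr (- (real m + real n + 1) / 2) * w ^ m)"
  proof -
    define lw where "lw = ln w"
    define ll where "ll = ln lam"
    define la where "la = ln a"
    have "ln (w ^ (N - n) * (w / lam) ^ m * ((w / lam) / a) powr ((real n - real m + 1) / 2))
       = (real N - real n) * lw + real m * (lw - ll) + ((real n - real m + 1) / 2) * (lw - ll - la)"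
      using w lam a n unfolding lw_def ll_def la_def by (simp add: ln_mult ln_div ln_realpow ln_powr of_nat_diff)
    also have "\<dots> = (real N + 1) * lw + real m * la + (- (real m + real n + 1) / 2) * (ll + la + lw) + real m * lw"
      by (simp add: algebra_simps add_divide_distrib diff_divide_distrib)
    also have "\<dots> = ln (w ^ Suc N * a ^ m * (lam * a * w) powr (- (real m + real n + 1) / 2) * w ^ m)"
      using w lam a unfolding lw_def ll_def la_def by (simp add: ln_mult ln_realpow ln_powr algebra_simps)
    finally show ?thesis .
  qed
  then show ?thesis using L R by (simp only: ln_inj_iff)
qed

lemma besselK_neg: "besselK (- nu) z = besselK nu z"
  unfolding besselK_def by simp

lemma regroup:
  fixes a e u v B K P q r W f1 f2 f3 :: real
  assumes "u * v * B = W ^ s * q * P * r"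
  shows "a ^ s * e * u * v / (f1 * f2 * f3) * (2 * B * K) = 2 * (a * W) ^ s * e * (q * P * r / (f3 * f1 * f2) * K)"
proof -
  have "a ^ s * e * u * v / (f1 * f2 * f3) * (2 * B * K) = 2 * a^s * e * (u * v * B) * K * inverse (f1*f2*f3)"
    by (simp add: divide_inverse mult_ac)
  also have "\<dots> = 2 * a^s * e * (W ^ s * q * P * r) * K * inverse (f1*f2*f3)" using assms by simp
  also have "\<dots> = 2 * (a * W) ^ s * e * (q * P * r / (f3 * f1 * f2) * K)"
    by (simp add: divide_inverse power_mult_distrib mult_ac)
  finally show ?thesis .
qed

lemma term_id:
  fixes w lam :: real assumes w: "w > 0" and lam: "lam > 0" and n: "n \<le> N" and nS: "nS = Suc N"
  shows "coefT N w lam m n * (2 * ((w / lam) / real nS) powr ((real n - real m + 1) / 2)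
            * besselK (real n - real m + 1) (2 * sqrt (real nS * (w / lam))))
   = 2 * (real nS * w) ^ nS * exp (- real nS * w) *
       (real nS ^ m * (lam * real nS * w) powr (- (real m + real n + 1) / 2) * w ^ m
        / (fact m * fact n * fact (nS - n - 1))
        * besselK (real_of_int (int m - int n - 1)) (2 * sqrt (real nS * w / lam)))"
proof -
  have K: "besselK (real_of_int (int m - int n - 1)) (2 * sqrt (real nS * w / lam))
      = besselK (real n - real m + 1) (2 * sqrt (real nS * (w / lam)))"
    using besselK_neg[of "real n - real m + 1"] by simp
  have c: "w ^ (N - n) * (w / lam) ^ m * ((w / lam) / real nS) powr ((real n - real m + 1) / 2)
       = w ^ Suc N * real nS ^ m * (lam * real nS * w) powr (- (real m + real n + 1) / 2) * w ^ m"
    using core_id[OF w lam _ n, of "real nS" m] nS by simp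
  have e: "nS - n - 1 = N - n" using nS by simp
  show ?thesis unfolding K e coefT_def unfolding nS
    by (rule regroup) (use c[unfolded nS] in simp)
qed

lemma g1:
  fixes p e1 e2 F C tn wn f1 f2 :: real
  assumes "C = F / (f1 * f2)" "F \<noteq> 0"
  shows "p * e1 * e2 / F * (C * tn * wn) = p * e1 * wn / (f1 * f2) * (tn * e2)"
  using assms by (simp add: field_simps)

lemma g2:
  fixes x y e f :: real
  shows "x / y * e / f = x / f * (e / y)"
  by (simp add: field_simps)

lemma expansion:
  fixes w lam t :: real and N k :: nat
  assumes w: "w > 0" and lam: "lam > 0" and t: "t > 0"
  shows "erlang_density N (real (Suc N)) (w + t) * (\<Sum>m\<le>k. (w / (lam * t)) ^ m * exp (- (w / (lam * t))) / fact m)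
    = (\<Sum>m\<le>k. \<Sum>n\<le>N. coefT N w lam m n * (t powr (real n - real m) * exp (- real (Suc N) * t - (w / lam) / t)))"
proof -
  define a where "a = real (Suc N)"
  define A where "A n = a ^ Suc N * exp (- a * w) * w ^ (N - n) / (fact n * fact (N - n)) * (t ^ n * exp (- a * t))" for n
  define B where "B m = (w / lam) ^ m / fact m * (exp (- (w / lam) / t) / t ^ m)" for m
  have ex: "exp (- (a * (w + t))) = exp (- (a * w)) * exp (- (a * t))"
    by (simp add: exp_add[symmetric] algebra_simps)
  have fY: "erlang_density N a (w + t) = (\<Sum>n\<le>N. A n)"
  proof -
    have "erlang_density N a (w + t) = a ^ Suc N * exp (- a * w) * exp (- a * t) / fact N * (w + t) ^ N"
      using w t by (simp add: erlang_density_def ex)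
    also have "(w + t) ^ N = (\<Sum>n\<le>N. of_nat (N choose n) * t ^ n * w ^ (N - n))"
      using binomial_ring[of t w N] by (simp add: add.commute)
    also have "a ^ Suc N * exp (- a * w) * exp (- a * t) / fact N * (\<Sum>n\<le>N. of_nat (N choose n) * t ^ n * w ^ (N - n))
       = (\<Sum>n\<le>N. a ^ Suc N * exp (- a * w) * exp (- a * t) / fact N * (of_nat (N choose n) * t ^ n * w ^ (N - n)))"
      by (rule sum_distrib_left)
    also have "\<dots> = (\<Sum>n\<le>N. A n)"
    proof (rule sum.cong[OF refl])
      fix n assume "n \<in> {..N}"
      then have "(of_nat (N choose n) :: real) = fact N / (fact n * fact (N - n))" by (simp add: binomial_fact)
      then show "a ^ Suc N * exp (- a * w) * exp (- a * t) / fact N * (of_nat (N choose n) * t ^ n * w ^ (N - n)) = A n"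
        unfolding A_def by (rule g1) auto
    qed
    finally show ?thesis .
  qed
  have T: "(\<Sum>m\<le>k. (w / (lam * t)) ^ m * exp (- (w / (lam * t))) / fact m) = (\<Sum>m\<le>k. B m)"
  proof (rule sum.cong[OF refl])
    fix m
    have "(w / (lam * t)) ^ m = (w / lam) ^ m / t ^ m" by (simp add: power_divide power_mult_distrib)
    moreover have "w / (lam * t) = (w / lam) / t" by simp
    ultimately show "(w / (lam * t)) ^ m * exp (- (w / (lam * t))) / fact m = B m"
      unfolding B_def by (simp only: g2 minus_divide_left)
  qed
  have AB: "A n * B m = coefT N w lam m n * (t powr (real n - real m) * exp (- a * t - (w / lam) / t))" for n m
  proof -
    have p: "t powr (real n - real m) = t ^ n / t ^ m" using t by (simp add: powr_diff powr_realpow)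
    have e: "exp (- a * t - (w / lam) / t) = exp (- a * t) * exp (- (w / lam) / t)"
      by (simp add: exp_add[symmetric])
    show ?thesis unfolding p e A_def B_def coefT_def a_def[symmetric] by (simp add: field_simps)
  qed
  have "erlang_density N a (w + t) * (\<Sum>m\<le>k. (w / (lam * t)) ^ m * exp (- (w / (lam * t))) / fact m)
      = (\<Sum>n\<le>N. A n) * (\<Sum>m\<le>k. B m)" unfolding fY T ..
  also have "\<dots> = (\<Sum>n\<le>N. \<Sum>m\<le>k. A n * B m)" by (rule sum_product)
  also have "\<dots> = (\<Sum>m\<le>k. \<Sum>n\<le>N. A n * B m)" by (rule sum.swap)
  also have "\<dots> = (\<Sum>m\<le>k. \<Sum>n\<le>N. coefT N w lam m n * (t powr (real n - real m) * exp (- a * t - (w / lam) / t)))"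
    unfolding AB ..
  finally show ?thesis unfolding a_def .
qed

lemma coefT_nonneg: "w > 0 \<Longrightarrow> lam > 0 \<Longrightarrow> 0 \<le> coefT N w lam m n"
  unfolding coefT_def by simp

lemma outer:
  fixes w lam :: real and N k :: nat
  assumes w: "w > 0" and lam: "lam > 0"
  shows "(\<integral>\<^sup>+y. ennreal (erlang_density N (real (Suc N)) y) *
            ennreal (if w < y then (\<Sum>m\<le>k. (w / (lam * (y - w))) ^ m * exp (- (w / (lam * (y - w)))) / fact m) else 0) \<partial>lborel)
    = ennreal (\<Sum>m\<le>k. \<Sum>n\<le>N. coefT N w lam m n * (2 * ((w / lam) / real (Suc N)) powr ((real n - real m + 1) / 2)
            * besselK (real n - real m + 1) (2 * sqrt (real (Suc N) * (w / lam)))))"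
proof -
  define G where "G y = (\<Sum>m\<le>k. (w / (lam * (y - w))) ^ m * exp (- (w / (lam * (y - w)))) / fact m)" for y
  define F where "F y = (if w < y then erlang_density N (real (Suc N)) y * G y else 0)" for y
  define g where "g m n t = t powr (real n - real m) * exp (- real (Suc N) * t - (w / lam) / t)" for m n :: nat and t :: real
  have Gnn: "w < y \<Longrightarrow> 0 \<le> G y" for y unfolding G_def using w lam by (intro sum_nonneg) auto
  have Fm[measurable]: "F \<in> borel_measurable borel" unfolding F_def G_def by measurable
  have gm[measurable]: "(\<lambda>t. g m n t) \<in> borel_measurable borel" for m n unfolding g_def by measurable
  have gnn: "0 \<le> g m n t" for m n t unfolding g_def by simp
  have "(\<integral>\<^sup>+y. ennreal (erlang_density N (real (Suc N)) y) *
            ennreal (if w < y then G y else 0) \<partial>lborel) = (\<integral>\<^sup>+y. ennreal (F y) \<partial>lborel)"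
    by (intro nn_integral_cong) (auto simp: F_def Gnn ennreal_mult[symmetric])
  also have "\<dots> = ennreal \<bar>1\<bar> * (\<integral>\<^sup>+t. ennreal (F (w + 1 * t)) \<partial>lborel)"
    by (rule nn_integral_real_affine) auto
  also have "\<dots> = (\<integral>\<^sup>+t. (\<Sum>m\<le>k. \<Sum>n\<le>N. ennreal (coefT N w lam m n) * (ennreal (g m n t) * indicator {0<..} t)) \<partial>lborel)"
  proof (simp, intro nn_integral_cong)
    fix t :: real
    show "ennreal (F (w + t)) = (\<Sum>m\<le>k. \<Sum>n\<le>N. ennreal (coefT N w lam m n) * (ennreal (g m n t) * indicator {0<..} t))"
    proof (cases "t > 0")
      case True
      have "F (w + t) = (\<Sum>m\<le>k. \<Sum>n\<le>N. coefT N w lam m n * g m n t)"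
        using expansion[OF w lam True, of N k] True unfolding F_def G_def g_def by simp
      also have "ennreal \<dots> = (\<Sum>m\<le>k. \<Sum>n\<le>N. ennreal (coefT N w lam m n * g m n t))"
        using coefT_nonneg[OF w lam] gnn
        by (simp add: sum_nonneg)
      finally show ?thesis using True coefT_nonneg[OF w lam] gnn by (simp add: ennreal_mult)
    next
      case False
      then show ?thesis by (simp add: F_def)
    qed
  qed
  also have "\<dots> = (\<Sum>m\<le>k. \<Sum>n\<le>N. ennreal (coefT N w lam m n) * (\<integral>\<^sup>+t. ennreal (g m n t) * indicator {0<..} t \<partial>lborel))"
    by (simp add: nn_integral_sum nn_integral_cmult)
  also have "\<dots> = (\<Sum>m\<le>k. \<Sum>n\<le>N. ennreal (coefT N w lam m n * (2 * ((w / lam) / real (Suc N)) powr ((real n - real m + 1) / 2)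
            * besselK (real n - real m + 1) (2 * sqrt (real (Suc N) * (w / lam))))))"
  proof (intro sum.cong refl)
    fix m n
    have "(\<integral>\<^sup>+t. ennreal (g m n t) * indicator {0<..} t \<partial>lborel)
      = ennreal (2 * ((w / lam) / real (Suc N)) powr ((real n - real m + 1) / 2)
            * besselK (real n - real m + 1) (2 * sqrt (real (Suc N) * (w / lam))))"
      using bessel_int[of "real (Suc N)" "w / lam" "real n - real m + 1"] w lam unfolding g_def by simp
    then show "ennreal (coefT N w lam m n) * (\<integral>\<^sup>+t. ennreal (g m n t) * indicator {0<..} t \<partial>lborel) =
        ennreal (coefT N w lam m n * (2 * ((w / lam) / real (Suc N)) powr ((real n - real m + 1) / 2)
            * besselK (real n - real m + 1) (2 * sqrt (real (Suc N) * (w / lam)))))"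
      using coefT_nonneg[OF w lam] besselK_nonneg by (simp add: ennreal_mult)
  qed
  also have "\<dots> = ennreal (\<Sum>m\<le>k. \<Sum>n\<le>N. coefT N w lam m n * (2 * ((w / lam) / real (Suc N)) powr ((real n - real m + 1) / 2)
            * besselK (real n - real m + 1) (2 * sqrt (real (Suc N) * (w / lam)))))"
    using coefT_nonneg[OF w lam] besselK_nonneg by (simp add: sum_nonneg)
  finally show ?thesis unfolding G_def .
qed

theorem theorem2:
  fixes M :: "'a measure" and Y :: "'a \<Rightarrow> real" and X :: "nat \<Rightarrow> 'a \<Rightarrow> real"
    and nS nR :: nat and gS lamG x :: real
  assumes "prob_space M"
    and "nS \<ge> 1" and "nR \<ge> 1" and "gS > 0" and "lamG > 0"
    and Y_distr: "distributed M lborel Y (erlang_density (nS - 1) (real nS))"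
    and X_distr: "\<And>j. j \<in> {1..nR} \<Longrightarrow> distributed M lborel (X j) (exponential_density 1)"
    and indep: "prob_space.indep_vars M (\<lambda>_. borel)
                  (\<lambda>i. case i of None \<Rightarrow> Y | Some j \<Rightarrow> X j) (insert None (Some ` {1..nR}))"
    and "x > 0"
  shows "let V = (\<lambda>\<omega>. lamG * (\<Sum>j=1..nR. X j \<omega>));
             w = x / gS
         in measure M {\<omega> \<in> space M. gS * Y \<omega> * (V \<omega> / (1 + V \<omega>)) \<le> x}
            = 1 - 2 * (real nS * w) ^ nS * exp (- real nS * w) *
                (\<Sum>m<nR. \<Sum>n<nS.
                   real nS ^ m * (lamG * real nS * w) powr (- (real m + real n + 1) / 2) * w ^ m
                   / (fact m * fact n * fact (nS - n - 1))
                   * besselK (real_of_int (int m - int n - 1)) (2 * sqrt (real nS * w / lamG)))"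
proof -
  interpret P: prob_space M by fact
  obtain N where nS: "nS = Suc N" using \<open>nS \<ge> 1\<close> by (cases nS) auto
  obtain k where nR: "nR = Suc k" using \<open>nR \<ge> 1\<close> by (cases nR) auto
  have gS: "gS > 0" and lam: "lamG > 0" by fact+
  define w where "w = x / gS"
  have w: "w > 0" unfolding w_def using gS \<open>x > 0\<close> by simp
  define S where "S \<omega> = (\<Sum>j=1..nR. X j \<omega>)" for \<omega>
  define Z where "Z = (\<lambda>i. case i of None \<Rightarrow> Y | Some j \<Rightarrow> X j)"
  have indZ: "P.indep_vars (\<lambda>_. borel) Z (insert None (Some ` {1..nR}))" using indep unfolding Z_def .
  have sumZ: "(\<lambda>\<omega>. \<Sum>i\<in>Some ` {1..nR}. Z i \<omega>) = S"
    by (auto simp: S_def Z_def sum.reindex fun_eq_iff)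
  have S_distr: "distributed M lborel S (erlang_density k 1)"
  proof -
    have "distributed M lborel (\<lambda>\<omega>. \<Sum>i\<in>Some ` {1..nR}. Z i \<omega>) (erlang_density (card (Some ` {1..nR}) - 1) 1)"
    proof (rule P.exponential_distributed_sum)
      show "P.indep_vars (\<lambda>i. borel) Z (Some ` {1..nR})" by (rule P.indep_vars_subset[OF indZ]) auto
      show "\<And>i. i \<in> Some ` {1..nR} \<Longrightarrow> distributed M lborel (Z i) (exponential_density 1)"
        using X_distr by (auto simp: Z_def)
    qed (use nR in auto)
    then show ?thesis using sumZ nR by (simp add: card_image)
  qed
  have indYS: "P.indep_var borel Y borel S"
    using P.indep_vars_sum[of "Some ` {1..nR}" None Z] indZ sumZ by (simp add: Z_def)
  have indYS': "P.indep_var lborel Y lborel S"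
    using indYS unfolding P.indep_var_def P.indep_vars_def by (simp add: case_bool_if)
  have Y_distr': "distributed M lborel Y (erlang_density N (real nS))" using Y_distr nS by simp
  have Ym[measurable]: "Y \<in> borel_measurable M" using distributed_measurable[OF Y_distr] by simp
  have Sm[measurable]: "S \<in> borel_measurable M" using distributed_measurable[OF S_distr] by simp
  have joint: "distributed M (lborel \<Otimes>\<^sub>M lborel) (\<lambda>\<omega>. (Y \<omega>, S \<omega>))
      (\<lambda>(y, s). ennreal (erlang_density N (real nS) y) * ennreal (erlang_density k 1 s))"
    by (rule P.distributed_joint_indep[OF lborel.sigma_finite_measure_axioms lborel.sigma_finite_measure_axioms Y_distr' S_distr indYS'])
  define A where "A = {p::real \<times> real. w < fst p * (lamG * snd p / (1 + lamG * snd p))}"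
  have Am: "A \<in> sets (lborel \<Otimes>\<^sub>M lborel)"
  proof -
    have "{p \<in> space (lborel \<Otimes>\<^sub>M lborel). w < fst p * (lamG * snd p / (1 + lamG * snd p))} \<in> sets (lborel \<Otimes>\<^sub>M lborel)"
      by measurable
    also have "{p \<in> space (lborel \<Otimes>\<^sub>M lborel). w < fst p * (lamG * snd p / (1 + lamG * snd p))} = A"
      by (auto simp: A_def space_pair_measure)
    finally show ?thesis .
  qed
  define E' where "E' = {\<omega> \<in> space M. x < gS * Y \<omega> * (lamG * S \<omega> / (1 + lamG * S \<omega>))}"
  have E'eq: "E' = (\<lambda>\<omega>. (Y \<omega>, S \<omega>)) -` A \<inter> space M"
    using gS by (auto simp: A_def E'_def w_def pos_divide_less_eq mult_ac)
  have E'm: "E' \<in> P.events" unfolding E'_def by measurable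
  define H where "H p = (case p of (y, s) \<Rightarrow> ennreal (erlang_density N (real nS) y) * ennreal (erlang_density k 1 s)) * indicator A p" for p :: "real \<times> real"
  have Hm: "H \<in> borel_measurable (lborel \<Otimes>\<^sub>M lborel)" unfolding H_def using Am by measurable
  define R0 where "R0 = (\<Sum>m\<le>k. \<Sum>n\<le>N. coefT N w lamG m n * (2 * ((w / lamG) / real (Suc N)) powr ((real n - real m + 1) / 2)
            * besselK (real n - real m + 1) (2 * sqrt (real (Suc N) * (w / lamG)))))"
  have "emeasure M E' = (\<integral>\<^sup>+p. H p \<partial>(lborel \<Otimes>\<^sub>M lborel))"
    unfolding E'eq H_def by (rule distributed_emeasure[OF joint Am])
  also have "\<dots> = (\<integral>\<^sup>+y. \<integral>\<^sup>+s. H (y, s) \<partial>lborel \<partial>lborel)"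
    by (rule lborel.nn_integral_fst[symmetric, OF Hm])
  also have "\<dots> = (\<integral>\<^sup>+y. ennreal (erlang_density N (real (Suc N)) y) *
            ennreal (if w < y then (\<Sum>m\<le>k. (w / (lamG * (y - w))) ^ m * exp (- (w / (lamG * (y - w)))) / fact m) else 0) \<partial>lborel)"
  proof (intro nn_integral_cong)
    fix y :: real
    have "(\<integral>\<^sup>+s. H (y, s) \<partial>lborel) = (\<integral>\<^sup>+s. ennreal (erlang_density N (real nS) y) *
        (ennreal (erlang_density k 1 s) * indicator {s. w < y * (lamG * s / (1 + lamG * s))} s) \<partial>lborel)"
      by (intro nn_integral_cong) (simp add: H_def A_def split: split_indicator)
    also have "\<dots> = ennreal (erlang_density N (real nS) y) *
        (\<integral>\<^sup>+s. ennreal (erlang_density k 1 s) * indicator {s. w < y * (lamG * s / (1 + lamG * s))} s \<partial>lborel)"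
      by (rule nn_integral_cmult) measurable
    finally show "(\<integral>\<^sup>+s. H (y, s) \<partial>lborel) = ennreal (erlang_density N (real (Suc N)) y) *
            ennreal (if w < y then (\<Sum>m\<le>k. (w / (lamG * (y - w))) ^ m * exp (- (w / (lamG * (y - w)))) / fact m) else 0)"
      using inner_int[OF w lam, of k y] nS by simp
  qed
  also have "\<dots> = ennreal R0" unfolding R0_def by (rule outer[OF w lam])
  finally have eR0: "emeasure M E' = ennreal R0" .
  have R0nn: "0 \<le> R0" unfolding R0_def using coefT_nonneg[OF w lam] besselK_nonneg
    by (intro sum_nonneg mult_nonneg_nonneg) auto
  have mE': "measure M E' = R0" using eR0 R0nn by (simp add: P.emeasure_eq_measure)
  have set_eq: "{\<omega> \<in> space M. gS * Y \<omega> * (lamG * S \<omega> / (1 + lamG * S \<omega>)) \<le> x} = space M - E'"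
    by (auto simp: E'_def)
  have R0eq: "R0 = 2 * (real nS * w) ^ nS * exp (- real nS * w) *
                (\<Sum>m<nR. \<Sum>n<nS.
                   real nS ^ m * (lamG * real nS * w) powr (- (real m + real n + 1) / 2) * w ^ m
                   / (fact m * fact n * fact (nS - n - 1))
                   * besselK (real_of_int (int m - int n - 1)) (2 * sqrt (real nS * w / lamG)))"
  proof -
    have "R0 = (\<Sum>m\<le>k. \<Sum>n\<le>N. 2 * (real nS * w) ^ nS * exp (- real nS * w) *
       (real nS ^ m * (lamG * real nS * w) powr (- (real m + real n + 1) / 2) * w ^ m
        / (fact m * fact n * fact (nS - n - 1))
        * besselK (real_of_int (int m - int n - 1)) (2 * sqrt (real nS * w / lamG))))"
      unfolding R0_def nS[symmetric]
      by (intro sum.cong refl term_id[OF w lam _ nS]) auto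
    also have "\<dots> = 2 * (real nS * w) ^ nS * exp (- real nS * w) *
                (\<Sum>m\<le>k. \<Sum>n\<le>N.
                   real nS ^ m * (lamG * real nS * w) powr (- (real m + real n + 1) / 2) * w ^ m
                   / (fact m * fact n * fact (nS - n - 1))
                   * besselK (real_of_int (int m - int n - 1)) (2 * sqrt (real nS * w / lamG)))"
      by (simp add: sum_distrib_left)
    also have "{..k} = {..<nR}" using nR by (simp add: lessThan_Suc_atMost)
    also have "{..N} = {..<nS}" using nS by (simp add: lessThan_Suc_atMost)
    finally show ?thesis .
  qed
  show ?thesis
    unfolding Let_def w_def[symmetric] S_def[symmetric] set_eq
    using P.prob_compl[OF E'm] mE' R0eq by simp
qed

end
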